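(* Let $L$ be a lattice. Then the following are equivalent: (i) $L$ has permutable congruences; (ii) for all elements $a,b,c\in L$ with $a\leq c\leq b$, there exists $x\in L$ such that $a\equiv_{\Theta(c,b)}x$ and $x\equiv_{\Theta(a,c)}b$.
   Context: For binary relations $\alpha,\beta$ on a set $A$, $\alpha\beta=\{(x,y)\in A\times A : \exists z\in A,\ (x,z)\in\alpha \text{ and } (z,y)\in\beta\}$. We write $x\equiv_\alpha y$ for $(x,y)\in\alpha$. For a lattice $L$ and $x,y\in L$, $\Theta(x,y)=\Theta_L(x,y)$ denotes the least congruence of $L$ identifying $x$ and $y$. A lattice $L$ has permutable congruences if $\alpha\beta=\beta\alpha$ for all congruences $\alpha,\beta$ of $L$. *)

theory Defs
  imports Main
begin

definition lattice_congruence :: "('a::lattice) rel \<Rightarrow> bool" where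
  "lattice_congruence \<theta> \<longleftrightarrow> equiv UNIV \<theta> \<and>
     (\<forall>x y u v. (x, y) \<in> \<theta> \<longrightarrow> (u, v) \<in> \<theta> \<longrightarrow>
        (sup x u, sup y v) \<in> \<theta> \<and> (inf x u, inf y v) \<in> \<theta>)"

definition Theta :: "'a::lattice \<Rightarrow> 'a \<Rightarrow> 'a rel" where
  "Theta x y = \<Inter> {\<theta>. lattice_congruence \<theta> \<and> (x, y) \<in> \<theta>}"

text \<open>Permutable congruences; relational product alpha O beta is the
  composition alpha beta of the paper.\<close>

definition permutable_congruences :: "'a::lattice itself \<Rightarrow> bool" where
  "permutable_congruences _ \<longleftrightarrow>
     (\<forall>\<alpha> \<beta> :: 'a rel. lattice_congruence \<alpha> \<longrightarrow> lattice_congruence \<beta> \<longrightarrow>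
        \<alpha> O \<beta> = \<beta> O \<alpha>)"

end

theory Submission
  imports Defs
begin

lemma lc_refl: "lattice_congruence t \<Longrightarrow> (x, x) \<in> t"
  unfolding lattice_congruence_def equiv_def refl_on_def by blast
lemma lc_sym: "lattice_congruence t \<Longrightarrow> (x, y) \<in> t \<Longrightarrow> (y, x) \<in> t"
  unfolding lattice_congruence_def equiv_def sym_def by blast
lemma lc_trans: "lattice_congruence t \<Longrightarrow> (x, y) \<in> t \<Longrightarrow> (y, z) \<in> t \<Longrightarrow> (x, z) \<in> t"
  unfolding lattice_congruence_def equiv_def trans_def by blast
lemma lc_sup: "lattice_congruence t \<Longrightarrow> (x, y) \<in> t \<Longrightarrow> (u, v) \<in> t \<Longrightarrow> (sup x u, sup y v) \<in> t"
  unfolding lattice_congruence_def by blast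
lemma lc_inf: "lattice_congruence t \<Longrightarrow> (x, y) \<in> t \<Longrightarrow> (u, v) \<in> t \<Longrightarrow> (inf x u, inf y v) \<in> t"
  unfolding lattice_congruence_def by blast

lemma Theta_cong: "lattice_congruence (Theta (x::'a::lattice) y)"
proof -
  let ?S = "{\<theta>. lattice_congruence \<theta> \<and> (x, y) \<in> \<theta>}"
  have r: "(a, a) \<in> Theta x y" for a
    unfolding Theta_def using lc_refl by blast
  have s: "(a, b) \<in> Theta x y \<Longrightarrow> (b, a) \<in> Theta x y" for a b
    unfolding Theta_def using lc_sym by blast
  have t: "(a, b) \<in> Theta x y \<Longrightarrow> (b, c) \<in> Theta x y \<Longrightarrow> (a, c) \<in> Theta x y" for a b c
    unfolding Theta_def using lc_trans by blast
  have j: "(a, b) \<in> Theta x y \<Longrightarrow> (c, d) \<in> Theta x y \<Longrightarrow> (sup a c, sup b d) \<in> Theta x y" for a b c d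
    unfolding Theta_def using lc_sup by blast
  have m: "(a, b) \<in> Theta x y \<Longrightarrow> (c, d) \<in> Theta x y \<Longrightarrow> (inf a c, inf b d) \<in> Theta x y" for a b c d
    unfolding Theta_def using lc_inf by blast
  have "equiv UNIV (Theta x y)"
    by (rule equivI) (auto simp: refl_on_def sym_def trans_def intro: r s t)
  then show ?thesis unfolding lattice_congruence_def using j m by blast
qed

lemma Theta_in: "(x, y) \<in> Theta x y"
  unfolding Theta_def by blast

lemma Theta_least: "lattice_congruence t \<Longrightarrow> (x, y) \<in> t \<Longrightarrow> Theta x y \<subseteq> t"
  unfolding Theta_def by blast

lemma main_incl:
  fixes al be :: "('a::lattice) rel"
  assumes H: "\<forall>a b c :: 'a. a \<le> c \<and> c \<le> b \<longrightarrow>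
       (\<exists>x. (a, x) \<in> Theta c b \<and> (x, b) \<in> Theta a c)"
    and A: "lattice_congruence al" and B: "lattice_congruence be"
  shows "al O be \<subseteq> be O al"
proof
  have P: "\<And>al be (a::'a) b c. lattice_congruence al \<Longrightarrow> lattice_congruence be \<Longrightarrow>
     a \<le> c \<Longrightarrow> c \<le> b \<Longrightarrow> (a, c) \<in> al \<Longrightarrow> (c, b) \<in> be \<Longrightarrow>
     \<exists>y. (a, y) \<in> be \<and> (y, b) \<in> al"
  proof -
    fix al be and a b c :: 'a
    assume "lattice_congruence al" "lattice_congruence be" "a \<le> c" "c \<le> b"
      "(a, c) \<in> al" "(c, b) \<in> be"
    moreover obtain x where "(a, x) \<in> Theta c b" "(x, b) \<in> Theta a c"
      using H \<open>a \<le> c\<close> \<open>c \<le> b\<close> by blast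
    ultimately show "\<exists>y. (a, y) \<in> be \<and> (y, b) \<in> al"
      using Theta_least by blast
  qed
  fix p assume "p \<in> al O be"
  then obtain u z v where p: "p = (u, v)" and uz: "(u, z) \<in> al" and zv: "(z, v) \<in> be" by blast
  define s where "s = sup u (sup z v)"
  have "(sup u u, sup u z) \<in> al" using lc_sup[OF A lc_refl[OF A] uz] .
  hence 1: "(u, sup u z) \<in> al" by simp
  have "(sup u z, sup u (sup z v)) \<in> be"
    using lc_sup[OF B lc_refl[OF B, of u] lc_sup[OF B lc_refl[OF B, of z] zv]] by simp
  hence 2: "(sup u z, s) \<in> be" unfolding s_def .
  have "u \<le> sup u z" "sup u z \<le> s" unfolding s_def by (auto intro: le_supI2)
  then obtain x1 where x1: "(u, x1) \<in> be" "(x1, s) \<in> al" using P[OF A B _ _ 1 2] by blast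
  have "(sup v v, sup v z) \<in> be" using lc_sup[OF B lc_refl[OF B] lc_sym[OF B zv]] .
  hence 3: "(v, sup z v) \<in> be" by (simp add: sup_commute)
  have "(sup z (sup z v), sup u (sup z v)) \<in> al"
    using lc_sup[OF A lc_sym[OF A uz] lc_refl[OF A]] .
  hence 4: "(sup z v, s) \<in> al" unfolding s_def by (simp add: sup_assoc[symmetric])
  have "v \<le> sup z v" "sup z v \<le> s" unfolding s_def by auto
  then obtain w where w: "(v, w) \<in> al" "(w, s) \<in> be" using P[OF B A _ _ 3 4] by blast
  define y where "y = inf x1 w"
  have "(inf x1 w, inf s w) \<in> al" using lc_inf[OF A x1(2) lc_refl[OF A]] .
  moreover have "(inf s w, inf s v) \<in> al" using lc_inf[OF A lc_refl[OF A] lc_sym[OF A w(1)]] .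
  moreover have "inf s v = v" unfolding s_def by (rule inf_absorb2) (intro le_supI2 sup_ge2)
  ultimately have yv: "(y, v) \<in> al" unfolding y_def using lc_trans[OF A] by metis
  have "(inf x1 w, inf x1 s) \<in> be" using lc_inf[OF B lc_refl[OF B] w(2)] .
  moreover have "(inf x1 s, inf u s) \<in> be" using lc_inf[OF B lc_sym[OF B x1(1)] lc_refl[OF B]] .
  moreover have "inf u s = u" unfolding s_def by (rule inf_absorb1) simp
  ultimately have "(y, u) \<in> be" unfolding y_def using lc_trans[OF B] by metis
  hence "(u, y) \<in> be" using lc_sym[OF B] by blast
  with yv show "p \<in> be O al" unfolding p by blast
qed

theorem proposition1p1:
  shows "permutable_congruences TYPE('a::lattice) \<longleftrightarrow>
    (\<forall>a b c :: 'a. a \<le> c \<and> c \<le> b \<longrightarrow>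
       (\<exists>x. (a, x) \<in> Theta c b \<and> (x, b) \<in> Theta a c))"
proof
  assume pc: "permutable_congruences TYPE('a::lattice)"
  show "\<forall>a b c :: 'a. a \<le> c \<and> c \<le> b \<longrightarrow>
       (\<exists>x. (a, x) \<in> Theta c b \<and> (x, b) \<in> Theta a c)"
  proof (intro allI impI)
    fix a b c :: 'a
    have "(a, b) \<in> Theta a c O Theta c b" using Theta_in by blast
    also have "\<dots> = Theta c b O Theta a c"
      using pc Theta_cong unfolding permutable_congruences_def by blast
    finally show "\<exists>x. (a, x) \<in> Theta c b \<and> (x, b) \<in> Theta a c" by blast
  qed
next
  assume H: "\<forall>a b c :: 'a. a \<le> c \<and> c \<le> b \<longrightarrow>
       (\<exists>x. (a, x) \<in> Theta c b \<and> (x, b) \<in> Theta a c)"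
  show "permutable_congruences TYPE('a::lattice)"
    unfolding permutable_congruences_def
    using main_incl[OF H] by blast
qed

end
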